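(* Let $\ell$ be a prime, and let $n, d \ge 1$. Let $G \le G_n$ be a subgroup with $\dim(G_n/G) < \frac{n}{d}$. Then there exists an index $1 \le i \le n$ that is $d$-degenerate under $G$.
   Context: $G_n\cong(\mathbb{Z}/\ell)^n = \mathbb{F}_\ell^n$, with elements written $g=(g_1,\dots,g_n)$ and the group written multiplicatively. $\dim(G_n/G)$ denotes the dimension of $G_n/G$ as an $\mathbb{F}_\ell$-vector space. For a multi-index $\vec{i}=(1\le i_1<\dots<i_{d'}\le n)$, set $G_{\vec{i}}=\{g\in G_n \mid g_{i_1}\cdots g_{i_{d'}}=1\}$. An index $i$ is $d$-degenerate under $G\le G_n$ if $G$ is not contained in $G_{\vec{i}}$ for any $d'\le d$ and any multi-index $\vec{i}$ of length $d'$ containing $i$. *)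

theory Defs
  imports Complex_Main "HOL-Computational_Algebra.Primes"
begin

text \<open>G_n = (Z/l)^n, elements g = (g_1,...,g_n) represented as functions
  nat => int with g j in {0..<l} for 1 <= j <= n and g j = 0 otherwise.
  The group operation (written multiplicatively in the paper) is
  componentwise addition mod l; the identity is the zero function.\<close>

definition Gn :: "int \<Rightarrow> nat \<Rightarrow> (nat \<Rightarrow> int) set" where
  "Gn l n = {g. (\<forall>j\<in>{1..n}. 0 \<le> g j \<and> g j < l) \<and> (\<forall>j. j \<notin> {1..n} \<longrightarrow> g j = 0)}"

definition gmult :: "int \<Rightarrow> (nat \<Rightarrow> int) \<Rightarrow> (nat \<Rightarrow> int) \<Rightarrow> (nat \<Rightarrow> int)" where
  "gmult l g h = (\<lambda>j. (g j + h j) mod l)"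

definition ginv :: "int \<Rightarrow> (nat \<Rightarrow> int) \<Rightarrow> (nat \<Rightarrow> int)" where
  "ginv l g = (\<lambda>j. (- g j) mod l)"

definition is_subgroup :: "int \<Rightarrow> nat \<Rightarrow> (nat \<Rightarrow> int) set \<Rightarrow> bool" where
  "is_subgroup l n G \<longleftrightarrow> G \<subseteq> Gn l n \<and> (\<lambda>_. 0) \<in> G \<and>
     (\<forall>g\<in>G. \<forall>h\<in>G. gmult l g h \<in> G) \<and> (\<forall>g\<in>G. ginv l g \<in> G)"

text \<open>dim(G_n/G) as an F_l-vector space: the k with |G_n/G| = l^k,
  i.e. l^k * |G| = l^n.\<close>
definition quot_dim :: "int \<Rightarrow> nat \<Rightarrow> (nat \<Rightarrow> int) set \<Rightarrow> nat" where
  "quot_dim l n G = (THE k. l ^ k * int (card G) = l ^ n)"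

text \<open>G_I for a multi-index I (a set of indices in {1..n}):
  elements with g_{i_1} ... g_{i_d'} = 1, i.e. the coordinate sum is 0 mod l.\<close>
definition G_idx :: "int \<Rightarrow> nat \<Rightarrow> nat set \<Rightarrow> (nat \<Rightarrow> int) set" where
  "G_idx l n I = {g \<in> Gn l n. (\<Sum>j\<in>I. g j) mod l = 0}"

definition degenerate :: "int \<Rightarrow> nat \<Rightarrow> nat \<Rightarrow> (nat \<Rightarrow> int) set \<Rightarrow> nat \<Rightarrow> bool" where
  "degenerate l n d G i \<longleftrightarrow>
     (\<forall>I. I \<subseteq> {1..n} \<and> i \<in> I \<and> card I \<le> d \<longrightarrow> \<not> G \<subseteq> G_idx l n I)"

end

theory Submission imports Defs "HOL-Algebra.Coset" "HOL-Library.FuncSet"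
begin

definition ZG :: "int \<Rightarrow> nat \<Rightarrow> (nat \<Rightarrow> int) monoid" where
  "ZG l n = \<lparr>carrier = Gn l n, mult = gmult l, one = (\<lambda>_. 0)\<rparr>"

lemma Gn_vals: "g \<in> Gn l n \<Longrightarrow> j \<in> {1..n} \<Longrightarrow> 0 \<le> g j \<and> g j < l"
  and Gn_out: "g \<in> Gn l n \<Longrightarrow> j \<notin> {1..n} \<Longrightarrow> g j = 0"
  by (auto simp: Gn_def)

lemma Gn_mod: assumes "l > 0" "g \<in> Gn l n" shows "g j mod l = g j"
  using assms by (cases "j \<in> {1..n}") (auto simp: Gn_def)

lemma gmult_Gn: assumes "l > 0" "g \<in> Gn l n" "h \<in> Gn l n" shows "gmult l g h \<in> Gn l n"
  using assms by (auto simp: Gn_def gmult_def)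

lemma ginv_Gn: assumes "l > 0" "g \<in> Gn l n" shows "ginv l g \<in> Gn l n"
  using assms by (auto simp: Gn_def ginv_def)

lemma ZG_group: assumes "l > 0" shows "group (ZG l n)"
proof (rule groupI)
  show "\<And>x y. x \<in> carrier (ZG l n) \<Longrightarrow> y \<in> carrier (ZG l n) \<Longrightarrow> x \<otimes>\<^bsub>ZG l n\<^esub> y \<in> carrier (ZG l n)"
    using gmult_Gn[OF assms] by (simp add: ZG_def)
  show "\<one>\<^bsub>ZG l n\<^esub> \<in> carrier (ZG l n)" using assms by (simp add: ZG_def Gn_def)
  show "\<And>x y z. x \<in> carrier (ZG l n) \<Longrightarrow> y \<in> carrier (ZG l n) \<Longrightarrow> z \<in> carrier (ZG l n) \<Longrightarrow>
     x \<otimes>\<^bsub>ZG l n\<^esub> y \<otimes>\<^bsub>ZG l n\<^esub> z = x \<otimes>\<^bsub>ZG l n\<^esub> (y \<otimes>\<^bsub>ZG l n\<^esub> z)"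
    by (simp add: ZG_def gmult_def mod_add_left_eq mod_add_right_eq add.assoc)
  show "\<And>x. x \<in> carrier (ZG l n) \<Longrightarrow> \<one>\<^bsub>ZG l n\<^esub> \<otimes>\<^bsub>ZG l n\<^esub> x = x"
    using Gn_mod[OF assms] by (simp add: ZG_def gmult_def)
  show "\<And>x. x \<in> carrier (ZG l n) \<Longrightarrow> \<exists>y\<in>carrier (ZG l n). y \<otimes>\<^bsub>ZG l n\<^esub> x = \<one>\<^bsub>ZG l n\<^esub>"
  proof -
    fix x assume "x \<in> carrier (ZG l n)"
    then show "\<exists>y\<in>carrier (ZG l n). y \<otimes>\<^bsub>ZG l n\<^esub> x = \<one>\<^bsub>ZG l n\<^esub>"
      using ginv_Gn[OF assms]
      by (intro bexI[of _ "ginv l x"]) (auto simp: ZG_def gmult_def ginv_def mod_add_left_eq)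
  qed
qed

lemma ZG_inv: assumes "l > 0" "g \<in> Gn l n" shows "inv\<^bsub>ZG l n\<^esub> g = ginv l g"
  using group.inv_equality[OF ZG_group[OF assms(1)], where y = "ginv l g" and x = g] assms ginv_Gn[OF assms]
  by (auto simp: ZG_def gmult_def ginv_def mod_add_left_eq)

lemma card_Gn: assumes "l > 0" shows "card (Gn l n) = nat l ^ n"
proof -
  have "bij_betw (\<lambda>g. restrict g {1..n}) (Gn l n) (PiE {1..n} (\<lambda>_. {0..<l}))"
  proof (rule bij_betw_byWitness[where f' = "\<lambda>f j. if j \<in> {1..n} then f j else 0"])
    show "\<forall>a\<in>Gn l n. (\<lambda>j. if j \<in> {1..n} then restrict a {1..n} j else 0) = a"
      by (auto simp: Gn_def fun_eq_iff)
    show "\<forall>a'\<in>PiE {1..n} (\<lambda>_. {0..<l}). restrict (\<lambda>j. if j \<in> {1..n} then a' j else 0) {1..n} = a'"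
      by (auto simp: fun_eq_iff PiE_def extensional_def)
    show "(\<lambda>g. restrict g {1..n}) ` Gn l n \<subseteq> PiE {1..n} (\<lambda>_. {0..<l})"
      by (auto simp: Gn_def)
    show "(\<lambda>f j. if j \<in> {1..n} then f j else 0) ` PiE {1..n} (\<lambda>_. {0..<l}) \<subseteq> Gn l n"
      by (auto simp: Gn_def PiE_def Pi_def)
  qed
  then have "card (Gn l n) = card (PiE {1..n} (\<lambda>_. {0..<l::int}))" by (rule bij_betw_same_card)
  also have "\<dots> = nat l ^ n" by (simp add: card_PiE)
  finally show ?thesis .
qed

lemma G_sub: assumes "is_subgroup l n G" shows "G \<subseteq> Gn l n"
  using assms by (simp add: is_subgroup_def)

lemma card_G_pow: assumes "prime l" "is_subgroup l n G"
  shows "\<exists>j\<le>n. card G = nat l ^ j \<and> quot_dim l n G = n - j"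
proof -
  have l1: "l > 1" using assms(1) prime_gt_1_int by blast
  then have l0: "l > 0" by simp
  interpret grp: group "ZG l n" by (rule ZG_group[OF l0])
  have sg: "subgroup G (ZG l n)"
  proof (rule grp.subgroupI)
    show "G \<subseteq> carrier (ZG l n)" using assms(2) by (simp add: ZG_def is_subgroup_def)
    show "G \<noteq> {}" using assms(2) by (auto simp: is_subgroup_def)
    show "\<And>a. a \<in> G \<Longrightarrow> inv\<^bsub>ZG l n\<^esub> a \<in> G"
      using assms(2) ZG_inv[OF l0] G_sub[OF assms(2)] by (auto simp: is_subgroup_def)
    show "\<And>a b. a \<in> G \<Longrightarrow> b \<in> G \<Longrightarrow> a \<otimes>\<^bsub>ZG l n\<^esub> b \<in> G"
      using assms(2) by (auto simp: is_subgroup_def ZG_def)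
  qed
  have "card (rcosets\<^bsub>ZG l n\<^esub> G) * card G = order (ZG l n)" by (rule grp.lagrange[OF sg])
  also have "\<dots> = nat l ^ n" using card_Gn[OF l0] by (simp add: order_def ZG_def)
  finally have "card G dvd nat l ^ n" by (metis dvd_triv_right)
  moreover have "prime (nat l)" using assms(1) by simp
  ultimately obtain j where j: "j \<le> n" "card G = nat l ^ j" using divides_primepow_nat by blast
  have "quot_dim l n G = n - j"
    unfolding quot_dim_def
  proof (rule the_equality)
    have "int (card G) = l ^ j" using j l0 by simp
    moreover have "l ^ (n - j) * l ^ j = l ^ n" by (metis power_add le_add_diff_inverse2 j(1))
    ultimately show "l ^ (n - j) * int (card G) = l ^ n" by simp
  next
    fix k assume "l ^ k * int (card G) = l ^ n"
    then have "l ^ (k + j) = l ^ n" using j l0 by (simp add: power_add)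
    then have "k + j = n" using l1 by (simp add: power_inject_exp)
    then show "k = n - j" by simp
  qed
  with j show ?thesis by blast
qed

definition PT :: "int \<Rightarrow> nat \<Rightarrow> (nat \<Rightarrow> int) set \<Rightarrow> nat set \<Rightarrow> bool" where
  "PT l n G T \<longleftrightarrow> (\<forall>g\<in>G. (\<forall>j\<in>{1..n}-T. g j = 0) \<longrightarrow> (\<forall>j\<in>T. g j = 0))"

lemma greedy:
  assumes l0: "l > 0" and sg: "is_subgroup l n G"
    and cov: "\<forall>i\<in>{1..n}. \<exists>I. I \<subseteq> {1..n} \<and> i \<in> I \<and> card I \<le> d \<and> G \<subseteq> G_idx l n I"
  shows "U \<subseteq> {1..n} \<Longrightarrow> \<exists>T\<subseteq>U. card U \<le> d * card T \<and> PT l n G T"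
proof (induction "card U" arbitrary: U rule: less_induct)
  case less
  show ?case
  proof (cases "U = {}")
    case True then show ?thesis by (intro exI[of _ "{}"]) (auto simp: PT_def)
  next
    case False
    then obtain i where iU: "i \<in> U" by blast
    then obtain I where I: "I \<subseteq> {1..n}" "i \<in> I" "card I \<le> d" "G \<subseteq> G_idx l n I"
    proof -
      have "i \<in> {1..n}" using iU less.prems by blast
      then show ?thesis using cov that by blast
    qed
    have finU: "finite U" using less.prems finite_subset by blast
    have finI: "finite I" using I(1) finite_subset by blast
    have "card (U - I) < card U" using iU I(2) finU by (intro psubset_card_mono) auto
    then obtain T' where T': "T' \<subseteq> U - I" "card (U - I) \<le> d * card T'" "PT l n G T'"
    proof -
      have "U - I \<subseteq> {1..n}" using less.prems by blast
      then show ?thesis using less.hyps[of "U - I"] that \<open>card (U - I) < card U\<close> by blast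
    qed
    have iT': "i \<notin> T'" using T'(1) I(2) by blast
    have finT': "finite T'" using T'(1) finU finite_subset by blast
    have "card U \<le> card ((U - I) \<union> I)" using finU finI by (intro card_mono) auto
    also have "\<dots> \<le> card (U - I) + card I" by (rule card_Un_le)
    also have "\<dots> \<le> d * card T' + d" using T'(2) I(3) by simp
    also have "\<dots> = d * card (insert i T')" using iT' finT' by simp
    finally have c: "card U \<le> d * card (insert i T')" .
    have P: "PT l n G (insert i T')"
      unfolding PT_def
    proof (intro ballI impI)
      fix g j assume gG: "g \<in> G" and z: "\<forall>j\<in>{1..n} - insert i T'. g j = 0" and jT: "j \<in> insert i T'"
      have gGn: "g \<in> Gn l n" using gG G_sub[OF sg] by blast
      have "g \<in> G_idx l n I" using gG I(4) by blast
      then have s: "(\<Sum>j\<in>I. g j) mod l = 0" by (simp add: G_idx_def)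
      have "(\<Sum>j\<in>I. g j) = g i + (\<Sum>j\<in>I - {i}. g j)" using finI I(2) by (simp add: sum.remove)
      also have "(\<Sum>j\<in>I - {i}. g j) = 0"
      proof (rule sum.neutral, rule ballI)
        fix x assume "x \<in> I - {i}"
        then have "x \<in> {1..n} - insert i T'" using T'(1) I(1) by blast
        then show "g x = 0" using z by blast
      qed
      finally have "g i mod l = 0" using s by simp
      then have gi: "g i = 0" using Gn_mod[OF l0 gGn, of i] by simp
      have "\<forall>j\<in>{1..n} - T'. g j = 0" using z gi by blast
      then have "\<forall>j\<in>T'. g j = 0" using T'(3) gG by (simp add: PT_def)
      then show "g j = 0" using jT gi by blast
    qed
    show ?thesis using c P T'(1) iU by (intro exI[of _ "insert i T'"]) auto
  qed
qed

lemma PT_inj: assumes l0: "l > 0" and sg: "is_subgroup l n G" and P: "PT l n G T"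
  shows "inj_on (\<lambda>g. restrict g ({1..n} - T)) G"
proof (rule inj_onI)
  fix g h assume gG: "g \<in> G" and hG: "h \<in> G" and eq: "restrict g ({1..n} - T) = restrict h ({1..n} - T)"
  have gGn: "g \<in> Gn l n" and hGn: "h \<in> Gn l n" using gG hG G_sub[OF sg] by auto
  define x where "x = gmult l g (ginv l h)"
  have xG: "x \<in> G" using sg gG hG by (simp add: is_subgroup_def x_def)
  have xj: "x j = (g j - h j) mod l" for j by (simp add: x_def gmult_def ginv_def mod_add_right_eq)
  have "\<forall>j\<in>{1..n} - T. x j = 0"
  proof
    fix j assume "j \<in> {1..n} - T"
    then have "g j = h j" using eq by (metis restrict_apply')
    then show "x j = 0" using xj by simp
  qed
  then have z: "\<forall>j\<in>T. x j = 0" using P xG by (simp add: PT_def)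
  show "g = h"
  proof
    fix j
    show "g j = h j"
    proof (cases "j \<in> {1..n}")
      case False then show ?thesis using gGn hGn by (simp add: Gn_def)
    next
      case True
      show ?thesis
      proof (cases "j \<in> T")
        case False then show ?thesis using eq True by (metis Diff_iff restrict_apply')
      next
        case jT: True
        have "(g j - h j) mod l = 0" using z jT xj by simp
        then have "l dvd g j - h j" by (simp add: mod_eq_0_iff_dvd)
        then have "g j mod l = h j mod l" by (simp add: mod_eq_dvd_iff)
        then show ?thesis using Gn_mod[OF l0 gGn, of j] Gn_mod[OF l0 hGn, of j] by simp
      qed
    qed
  qed
qed

lemma card_G_le: assumes l0: "l > 0" and sg: "is_subgroup l n G" and P: "PT l n G T" and T: "T \<subseteq> {1..n}"
  shows "card G \<le> nat l ^ (n - card T)"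
proof -
  have "card G \<le> card (PiE ({1..n} - T) (\<lambda>_. {0..<l}))"
  proof (rule card_inj_on_le[OF PT_inj[OF l0 sg P]])
    show "(\<lambda>g. restrict g ({1..n} - T)) ` G \<subseteq> PiE ({1..n} - T) (\<lambda>_. {0..<l})"
    proof
      fix f assume "f \<in> (\<lambda>g. restrict g ({1..n} - T)) ` G"
      then obtain g where g: "g \<in> G" "f = restrict g ({1..n} - T)" by blast
      then have "g \<in> Gn l n" using G_sub[OF sg] by blast
      then show "f \<in> PiE ({1..n} - T) (\<lambda>_. {0..<l})" using g(2) by (auto simp: Gn_def)
    qed
    show "finite (PiE ({1..n} - T) (\<lambda>_. {0..<l}))" by (intro finite_PiE) auto
  qed
  also have "\<dots> = nat l ^ card ({1..n} - T)" by (simp add: card_PiE)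
  also have "card ({1..n} - T) = n - card T" using T by (simp add: card_Diff_subset finite_subset)
  finally show ?thesis .
qed

theorem lemma2p11:
  fixes l :: int and n d :: nat and G :: "(nat \<Rightarrow> int) set"
  assumes "prime l" and "n \<ge> 1" and "d \<ge> 1"
    and "is_subgroup l n G"
    and "real (quot_dim l n G) < real n / real d"
  shows "\<exists>i\<in>{1..n}. degenerate l n d G i"
proof (rule ccontr)
  assume nt: "\<not> ?thesis"
  have cov: "\<forall>i\<in>{1..n}. \<exists>I. I \<subseteq> {1..n} \<and> i \<in> I \<and> card I \<le> d \<and> G \<subseteq> G_idx l n I"
  proof
    fix i assume "i \<in> {1..n}"
    then have "\<not> degenerate l n d G i" using nt by blast
    then show "\<exists>I. I \<subseteq> {1..n} \<and> i \<in> I \<and> card I \<le> d \<and> G \<subseteq> G_idx l n I"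
      unfolding degenerate_def by blast
  qed
  have l1': "l > 1" using assms(1) prime_gt_1_int by blast
  then have l0: "l > 0" and l1: "nat l > 1" by simp_all
  obtain T where T: "T \<subseteq> {1..n}" "n \<le> d * card T" "PT l n G T"
  proof -
    have "\<exists>T\<subseteq>{1..n}. card {1..n} \<le> d * card T \<and> PT l n G T"
      by (rule greedy[OF l0 assms(4) cov]) simp
    then show ?thesis using that by auto
  qed
  obtain j where j: "j \<le> n" "card G = nat l ^ j" "quot_dim l n G = n - j"
    using card_G_pow[OF assms(1,4)] by blast
  have "card G \<le> nat l ^ (n - card T)" by (rule card_G_le[OF l0 assms(4) T(3,1)])
  then have "nat l ^ j \<le> nat l ^ (n - card T)" by (simp only: j(2))
  then have "j \<le> n - card T" by (rule power_le_imp_le_exp[OF l1])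
  moreover have "card T \<le> n" using card_mono[OF finite_atLeastAtMost T(1)] by simp
  ultimately have "card T \<le> quot_dim l n G" using j(3) by linarith
  then have "d * card T \<le> d * quot_dim l n G" by (rule mult_le_mono2)
  then have "n \<le> d * quot_dim l n G" using T(2) by linarith
  then have a: "real n \<le> real d * real (quot_dim l n G)" by (simp only: of_nat_mult[symmetric] of_nat_le_iff)
  have "real d > 0" using assms(3) by simp
  then have "real (quot_dim l n G) * real d < real n" using assms(5) by (simp add: pos_less_divide_eq)
  then have b: "real d * real (quot_dim l n G) < real n" by (simp only: mult.commute)
  from a b show False by linarith
qed

end
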